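(* For integers $n,m$, the inequality \[ 4\,\operatorname{arccosh}\!\left(\frac{\cos(\pi/m)}{\sin(\pi/n)}\right) > 2\log n \] holds whenever $n\ge4, m\ge8$; or $n\ge 6, m\ge 5$; or $n\ge 8, m\ge 4$; or $n\ge 12, m\ge 3$. *)

theory Defs
  imports "HOL-Analysis.Analysis"
begin

end

theory Submission
  imports Defs
begin

lemma key:
  fixes N x :: real
  assumes N: "N \<ge> 1" and x: "x > (N + 1) / (2 * sqrt N)"
  shows "4 * arcosh x > 2 * ln N"
proof -
  have sN: "sqrt N > 0" using N by simp
  have c: "cosh (ln (sqrt N)) = (N + 1) / (2 * sqrt N)"
    using sN by (simp add: cosh_ln_real field_simps)
  have c1: "cosh (ln (sqrt N)) \<ge> 1" by (rule cosh_real_ge_1)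
  have l0: "ln (sqrt N) \<ge> 0" using N by simp
  have "arcosh (cosh (ln (sqrt N))) < arcosh x"
    using c c1 x by (subst arcosh_less_iff_real) auto
  then have "ln (sqrt N) < arcosh x" using arcosh_cosh_real[OF l0] by simp
  moreover have "ln N = 2 * ln (sqrt N)" using N by (simp add: ln_sqrt)
  ultimately show ?thesis by simp
qed

lemma cos_lb:
  fixes x :: real
  assumes "0 \<le> x" "x \<le> pi"
  shows "cos x \<ge> 1 - x^2 / 2"
proof -
  have "cos x = 1 - 2 * (sin (x/2))^2" using cos_double_sin[of "x/2"] by simp
  moreover have "sin (x/2) \<le> x/2" using assms by (intro sin_x_le_x) simp
  moreover have "sin (x/2) \<ge> 0" using assms by (intro sin_ge_zero) auto
  ultimately have "(sin (x/2))^2 \<le> (x/2)^2" by (intro power_mono) auto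
  then have "(sin (x/2))^2 \<le> x^2/4" by (simp add: power_divide)
  with \<open>cos x = _\<close> show ?thesis by linarith
qed

lemma cos_mono_m:
  fixes M m0 :: real
  assumes "1 \<le> m0" "m0 \<le> M"
  shows "cos (pi / M) \<ge> cos (pi / m0)"
proof (rule cos_monotone_0_pi_le)
  show "0 \<le> pi / M" using assms by simp
  show "pi / M \<le> pi / m0" using assms by (intro divide_left_mono) auto
  show "pi / m0 \<le> pi" using assms by (simp add: field_simps)
qed

lemma sin_ub:
  fixes N :: real
  assumes "N \<ge> 2"
  shows "0 < sin (pi / N) \<and> sin (pi / N) \<le> pi / N"
proof
  show "0 < sin (pi / N)" using assms by (intro sin_gt_zero) (auto simp: field_simps)
  show "sin (pi / N) \<le> pi / N" using assms by (intro sin_x_le_x) auto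
qed


lemma gen:
  fixes N c s c0 :: real
  assumes N: "N \<ge> 2" and c: "c \<ge> c0" "c0 > 0" and s: "s = sin (pi / N)"
    and num: "2 * c0 * N * sqrt N > pi * (N + 1)"
  shows "c / s > (N + 1) / (2 * sqrt N)"
proof -
  have s0: "0 < s" "s \<le> pi / N" using sin_ub[OF N] s by auto
  have sN: "sqrt N > 0" using N by simp
  have "c / s \<ge> c0 / (pi / N)"
    using s0 c by (intro frac_le) auto
  also have "c0 / (pi / N) = c0 * N / pi" by simp
  finally have 1: "c / s \<ge> c0 * N / pi" .
  have "(N + 1) / (2 * sqrt N) < c0 * N / pi"
    using num sN pi_gt_zero by (simp add: field_simps)
  with 1 show ?thesis by linarith
qed

lemma pi8: "cos (pi / 8) \<ge> 0.92"
proof -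
  have "cos (pi/8) \<ge> 1 - (pi/8)^2/2" using pi_gt_zero by (intro cos_lb) auto
  then have "cos (pi/8) \<ge> 1 - pi*pi/128" by (simp add: power2_eq_square)
  moreover have "pi*pi \<le> 3.15*3.15" using pi_gt_zero pi_approx by (intro mult_mono) auto
  ultimately show ?thesis by simp
qed

lemma pi5: "cos (pi / 5) \<ge> 0.8"
proof -
  have "cos (pi/5) \<ge> 1 - (pi/5)^2/2" using pi_gt_zero by (intro cos_lb) auto
  then have "cos (pi/5) \<ge> 1 - pi*pi/50" by (simp add: power2_eq_square)
  moreover have "pi*pi \<le> 3.15*3.15" using pi_gt_zero pi_approx by (intro mult_mono) auto
  ultimately show ?thesis by simp
qed

lemma pi4: "cos (pi / 4) \<ge> 0.7"
proof -
  have "sqrt 2 \<ge> 1.4" by (rule real_le_rsqrt) (simp add: power2_eq_square)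
  then show ?thesis by (simp add: cos_45)
qed

lemma pi4s: "sin (pi / 4) \<le> 0.7072"
proof -
  have "sqrt 2 \<le> 1.4144" by (rule real_le_lsqrt) (auto simp add: power2_eq_square)
  then show ?thesis by (simp add: sin_45)
qed

lemma numcase:
  fixes N c0 tt :: real
  assumes "N \<ge> 0" "tt \<ge> 0" "tt^2 \<le> N" "c0 > 0" "N * (2 * c0 * tt - 3.1416) > 3.1416"
  shows "2 * c0 * N * sqrt N > pi * (N + 1)"
proof -
  have "sqrt N \<ge> tt" using assms by (intro real_le_rsqrt) auto
  then have "2 * c0 * N * sqrt N \<ge> 2 * c0 * N * tt" using assms by (intro mult_left_mono) auto
  moreover have "pi * (N + 1) \<le> 3.1416 * (N + 1)" using pi_approx assms by (intro mult_right_mono) auto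
  ultimately show ?thesis using assms by (simp add: algebra_simps)
qed

theorem proposition1:
  fixes n m :: int
  assumes "(n \<ge> 4 \<and> m \<ge> 8) \<or> (n \<ge> 6 \<and> m \<ge> 5) \<or> (n \<ge> 8 \<and> m \<ge> 4) \<or> (n \<ge> 12 \<and> m \<ge> 3)"
  shows "4 * arcosh (cos (pi / real_of_int m) / sin (pi / real_of_int n)) > 2 * ln (real_of_int n)"
proof -
  define N where "N = real_of_int n"
  define M where "M = real_of_int m"
  have N4: "N \<ge> 4" and M3: "M \<ge> 3" using assms by (auto simp: N_def M_def)
  have "cos (pi / M) / sin (pi / N) > (N + 1) / (2 * sqrt N)"
  proof -
    consider "n = 4" "m \<ge> 8" | "n \<ge> 5" "m \<ge> 8" | "n \<ge> 6" "m \<ge> 5" | "n \<ge> 8" "m \<ge> 4"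
      | "n \<ge> 12" "m \<ge> 3" using assms by linarith
    then show ?thesis
    proof cases
      case 1
      then have N: "N = 4" and M: "M \<ge> 8" by (auto simp: N_def M_def)
      have c: "cos (pi / M) \<ge> 0.92" using cos_mono_m[of 8 M] M pi8 by simp
      have s: "sin (pi / N) \<le> 0.7072" "sin (pi / N) > 0" using pi4s sin_ub[of N] N by auto
      have "cos (pi / M) / sin (pi / N) \<ge> 0.92 / 0.7072" using c s by (intro frac_le) auto
      moreover have "sqrt N = 2" using N by simp
      ultimately show ?thesis using N by simp
    next
      case 2
      then have N: "N \<ge> 5" and M: "M \<ge> 8" by (auto simp: N_def M_def)
      have c: "cos (pi / M) \<ge> 0.92" using cos_mono_m[of 8 M] M pi8 by simp
      show ?thesis using N by (intro gen[OF _ c] numcase[where tt = "2.23"]) (auto simp: power2_eq_square)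
    next
      case 3
      then have N: "N \<ge> 6" and M: "M \<ge> 5" by (auto simp: N_def M_def)
      have c: "cos (pi / M) \<ge> 0.8" using cos_mono_m[of 5 M] M pi5 by simp
      show ?thesis using N by (intro gen[OF _ c] numcase[where tt = "2.44"]) (auto simp: power2_eq_square)
    next
      case 4
      then have N: "N \<ge> 8" and M: "M \<ge> 4" by (auto simp: N_def M_def)
      have c: "cos (pi / M) \<ge> 0.7" using cos_mono_m[of 4 M] M pi4 by simp
      show ?thesis using N by (intro gen[OF _ c] numcase[where tt = "2.82"]) (auto simp: power2_eq_square)
    next
      case 5
      then have N: "N \<ge> 12" and M: "M \<ge> 3" by (auto simp: N_def M_def)
      have c: "cos (pi / M) \<ge> 1/2" using cos_mono_m[of 3 M] M cos_60 by simp
      show ?thesis using N by (intro gen[OF _ c] numcase[where tt = "3.46"]) (auto simp: power2_eq_square)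
    qed
  qed
  then have "4 * arcosh (cos (pi / M) / sin (pi / N)) > 2 * ln N"
    using N4 by (intro key) auto
  then show ?thesis by (simp add: N_def M_def)
qed

end
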